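(* Let $\mathcal{J}$ be a Jordan algebra of finite dimension $n$ over a field $\mathcal{F}$ of characteristic different from $2$, let $\Lambda=(\lambda_{i,j})_{i,j=1,\dots,n}$ be an $n\times n$ matrix all of whose entries are non-zero elements of $\mathcal{F}$, and let $\mathcal{V}$ be a basis of $\mathcal{J}$. Let $\Delta:\mathcal{J}\to\mathcal{J}$ be a map such that for every $x,y\in\mathcal{J}$ there is an automorphism $\Phi_{x,y}$ of $\mathcal{J}$ which is $\Lambda$-symmetric with respect to $\mathcal{V}$ and satisfies $\Delta(x)=\Phi_{x,y}(x)$ and $\Delta(y)=\Phi_{x,y}(y)$. Then $\Delta$ is an automorphism.
   Context: For a linear map $\psi$ on $\mathcal{J}$ and the ordered basis $\mathcal{V}=(v_1,\dots,v_n)$, the matrix of $\psi$ is $(x_{i,j})$ with $\psi(v_j)=\sum_i x_{i,j}v_i$; $\psi$ is $\Lambda$-symmetric with respect to $\mathcal{V}$ if this matrix equals $(\lambda_{i,j}a_{i,j})_{i,j}$ for some symmetric matrix $(a_{i,j})$. *)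

theory Defs
  imports Complex_Main
begin

text \<open>Bilinearity in the second
  argument follows from linearity in the first plus commutativity.\<close>
definition jordan_algebra :: "('f::field \<Rightarrow> 'v::ab_group_add \<Rightarrow> 'v) \<Rightarrow> ('v \<Rightarrow> 'v \<Rightarrow> 'v) \<Rightarrow> bool" where
  "jordan_algebra sc m \<longleftrightarrow> vector_space sc
     \<and> (\<forall>x y z. m (x + y) z = m x z + m y z)
     \<and> (\<forall>c x y. m (sc c x) y = sc c (m x y))
     \<and> (\<forall>x y. m x y = m y x)
     \<and> (\<forall>x y. m (m x y) (m x x) = m x (m y (m x x)))"

definition ordered_basis :: "('f::field \<Rightarrow> 'v::ab_group_add \<Rightarrow> 'v) \<Rightarrow> nat \<Rightarrow> (nat \<Rightarrow> 'v) \<Rightarrow> bool" where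
  "ordered_basis sc n b \<longleftrightarrow> inj_on b {..<n}
     \<and> \<not> module.dependent sc (b ` {..<n})
     \<and> module.span sc (b ` {..<n}) = UNIV"

definition jordan_automorphism :: "('f::field \<Rightarrow> 'v::ab_group_add \<Rightarrow> 'v) \<Rightarrow> ('v \<Rightarrow> 'v \<Rightarrow> 'v) \<Rightarrow> ('v \<Rightarrow> 'v) \<Rightarrow> bool" where
  "jordan_automorphism sc m f \<longleftrightarrow> Vector_Spaces.linear sc sc f \<and> bij f
     \<and> (\<forall>x y. f (m x y) = m (f x) (f y))"

definition lambda_symmetric :: "('f::field \<Rightarrow> 'v::ab_group_add \<Rightarrow> 'v) \<Rightarrow> nat \<Rightarrow> (nat \<Rightarrow> 'v) \<Rightarrow> (nat \<Rightarrow> nat \<Rightarrow> 'f) \<Rightarrow> ('v \<Rightarrow> 'v) \<Rightarrow> bool" where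
  "lambda_symmetric sc n b \<Lambda> \<psi> \<longleftrightarrow> (\<exists>a::nat \<Rightarrow> nat \<Rightarrow> 'f.
     (\<forall>i<n. \<forall>j<n. a i j = a j i)
     \<and> (\<forall>j<n. \<psi> (b j) = (\<Sum>i<n. sc (\<Lambda> i j * a i j) (b i))))"

end

theory Submission
  imports Defs
begin

theorem theorem4p1:
  fixes sc :: "'f::field \<Rightarrow> 'v::ab_group_add \<Rightarrow> 'v"
    and m :: "'v \<Rightarrow> 'v \<Rightarrow> 'v"
    and n :: nat
    and b :: "nat \<Rightarrow> 'v"
    and \<Lambda> :: "nat \<Rightarrow> nat \<Rightarrow> 'f"
    and \<Delta> :: "'v \<Rightarrow> 'v"
  assumes char: "(2::'f) \<noteq> 0"
    and jordan: "jordan_algebra sc m"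
    and basis: "ordered_basis sc n b"
    and nonzero: "\<forall>i<n. \<forall>j<n. \<Lambda> i j \<noteq> 0"
    and local2: "\<forall>x y. \<exists>\<Phi>. jordan_automorphism sc m \<Phi> \<and> lambda_symmetric sc n b \<Lambda> \<Phi>
                        \<and> \<Delta> x = \<Phi> x \<and> \<Delta> y = \<Phi> y"
  shows "jordan_automorphism sc m \<Delta>"
proof -
  have vs: "vector_space sc" using jordan unfolding jordan_algebra_def by blast
  interpret V: vector_space sc by (rule vs)
  define B where "B = b ` {..<n}"
  have injb: "inj_on b {..<n}" and indep: "V.independent B" and spanB: "V.span B = UNIV"
    using basis unfolding ordered_basis_def B_def by auto
  have finB: "finite B" unfolding B_def by simp
  define R where "R x j = V.representation B x (b j)" for x j
  have E: "x = (\<Sum>j<n. sc (R x j) (b j))" for x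
  proof -
    have "(\<Sum>j<n. sc (R x j) (b j)) = (\<Sum>v\<in>B. sc (V.representation B x v) v)"
      unfolding B_def R_def by (simp add: sum.reindex[OF injb])
    also have "\<dots> = x" by (rule V.sum_representation_eq) (use indep spanB finB in auto)
    finally show ?thesis by simp
  qed
  have U: "R (\<Sum>i<n. sc (c i) (b i)) k = c k" if "k < n" for c k
  proof -
    have "R (\<Sum>i<n. sc (c i) (b i)) k = (\<Sum>i<n. c i * V.representation B (b i) (b k))"
      unfolding R_def
      by (simp add: V.representation_sum[OF indep] V.representation_scale[OF indep] spanB)
    also have "\<dots> = (\<Sum>i<n. if i = k then c i else 0)"
    proof (rule sum.cong[OF refl])
      fix i assume i: "i \<in> {..<n}"
      have "b i \<in> B" using i unfolding B_def by simp
      then have "V.representation B (b i) (b k) = (if b k = b i then 1 else 0)"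
        by (simp add: V.representation_basis[OF indep])
      moreover have "(b k = b i) = (k = i)" using injb i that unfolding inj_on_def by auto
      ultimately show "c i * V.representation B (b i) (b k) = (if i = k then c i else 0)"
        by auto
    qed
    also have "\<dots> = c k" using that by simp
    finally show ?thesis .
  qed
  have Radd: "R (x + y) k = R x k + R y k" for x y k
    unfolding R_def by (simp add: V.representation_add[OF indep] spanB)
  have Rscale: "R (sc c x) k = c * R x k" for c x k
    unfolding R_def by (simp add: V.representation_scale[OF indep] spanB)
  have PhiR: "R (\<Phi> x) k = (\<Sum>j<n. R x j * (\<Lambda> k j * a k j))"
    if lin: "Vector_Spaces.linear sc sc \<Phi>"
      and a: "\<forall>j<n. \<Phi> (b j) = (\<Sum>i<n. sc (\<Lambda> i j * a i j) (b i))" and k: "k < n" for \<Phi> a x k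
  proof -
    have "\<Phi> x = \<Phi> (\<Sum>j<n. sc (R x j) (b j))" using E by metis
    also have "\<dots> = (\<Sum>j<n. sc (R x j) (\<Phi> (b j)))"
    proof -
      interpret L: Vector_Spaces.linear sc sc \<Phi> by (rule lin)
      show ?thesis by (simp add: L.sum L.scale)
    qed
    also have "\<dots> = (\<Sum>j<n. \<Sum>i<n. sc (R x j * (\<Lambda> i j * a i j)) (b i))"
      using a by (simp add: V.scale_sum_right)
    also have "\<dots> = (\<Sum>i<n. sc (\<Sum>j<n. R x j * (\<Lambda> i j * a i j)) (b i))"
      by (subst sum.swap) (simp add: V.scale_sum_left)
    finally show ?thesis using U k by simp
  qed
  have DF: "R (\<Delta> x) k = (\<Sum>j<n. R x j * (\<Lambda> k j / \<Lambda> j k * R (\<Delta> (b k)) j))"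
    if k: "k < n" for x k
  proof -
    obtain \<Phi> where P: "jordan_automorphism sc m \<Phi>" "lambda_symmetric sc n b \<Lambda> \<Phi>"
      "\<Delta> x = \<Phi> x" "\<Delta> (b k) = \<Phi> (b k)" using local2 by blast
    obtain a where a: "\<forall>i<n. \<forall>j<n. a i j = a j i"
      "\<forall>j<n. \<Phi> (b j) = (\<Sum>i<n. sc (\<Lambda> i j * a i j) (b i))"
      using P(2) unfolding lambda_symmetric_def by blast
    have lin: "Vector_Spaces.linear sc sc \<Phi>" using P(1) unfolding jordan_automorphism_def by blast
    have "R (\<Delta> x) k = (\<Sum>j<n. R x j * (\<Lambda> k j * a k j))"
      using PhiR[OF lin a(2) k] P(3) by simp
    also have "\<dots> = (\<Sum>j<n. R x j * (\<Lambda> k j / \<Lambda> j k * R (\<Delta> (b k)) j))"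
    proof (rule sum.cong[OF refl])
      fix j assume j: "j \<in> {..<n}"
      have "R (\<Delta> (b k)) j = \<Lambda> j k * a j k"
        using P(4) a(2) k j U[of j "\<lambda>i. \<Lambda> i k * a i k"] by simp
      moreover have "\<Lambda> j k \<noteq> 0" using nonzero j k by simp
      ultimately show "R x j * (\<Lambda> k j * a k j) = R x j * (\<Lambda> k j / \<Lambda> j k * R (\<Delta> (b k)) j)"
        using a(1) j k by simp
    qed
    finally show ?thesis .
  qed
  have Dadd: "\<Delta> (x + y) = \<Delta> x + \<Delta> y" for x y
  proof -
    have "\<Delta> (x + y) = (\<Sum>k<n. sc (R (\<Delta> (x + y)) k) (b k))" using E by metis
    also have "\<dots> = (\<Sum>k<n. sc (R (\<Delta> x) k + R (\<Delta> y) k) (b k))"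
    proof (rule sum.cong[OF refl])
      fix k assume "k \<in> {..<n}"
      then have k: "k < n" by simp
      show "sc (R (\<Delta> (x + y)) k) (b k) = sc (R (\<Delta> x) k + R (\<Delta> y) k) (b k)"
        unfolding DF[OF k, of "x+y"] DF[OF k, of x] DF[OF k, of y]
        by (simp add: Radd distrib_right add_divide_distrib sum.distrib)
    qed
    also have "\<dots> = \<Delta> x + \<Delta> y"
      by (simp add: V.scale_left_distrib sum.distrib E[symmetric])
    finally show ?thesis .
  qed
  have Dscale: "\<Delta> (sc c x) = sc c (\<Delta> x)" for c x
  proof -
    have "\<Delta> (sc c x) = (\<Sum>k<n. sc (R (\<Delta> (sc c x)) k) (b k))" using E by metis
    also have "\<dots> = (\<Sum>k<n. sc c (sc (R (\<Delta> x) k) (b k)))"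
    proof (rule sum.cong[OF refl])
      fix k assume "k \<in> {..<n}"
      then have k: "k < n" by simp
      show "sc (R (\<Delta> (sc c x)) k) (b k) = sc c (sc (R (\<Delta> x) k) (b k))"
        unfolding DF[OF k, of "sc c x"] DF[OF k, of x]
        by (simp add: Rscale sum_distrib_left mult.assoc)
    qed
    also have "\<dots> = sc c (\<Delta> x)"
    proof -
      have "sc c (\<Delta> x) = sc c (\<Sum>k<n. sc (R (\<Delta> x) k) (b k))" using E by metis
      then show ?thesis by (simp add: V.scale_sum_right)
    qed
    finally show ?thesis .
  qed
  have linD: "Vector_Spaces.linear sc sc \<Delta>"
    unfolding Vector_Spaces.linear_iff using vs Dadd Dscale by blast
  have madd1: "m (x + y) z = m x z + m y z" and mcomm: "m x y = m y x" for x y z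
    using jordan unfolding jordan_algebra_def by blast+
  have madd2: "m z (x + y) = m z x + m z y" for x y z
    using madd1 mcomm by metis
  have Dsq: "\<Delta> (m x x) = m (\<Delta> x) (\<Delta> x)" for x
  proof -
    obtain \<Phi> where P: "jordan_automorphism sc m \<Phi>"
      "\<Delta> x = \<Phi> x" "\<Delta> (m x x) = \<Phi> (m x x)" using local2 by blast
    then show ?thesis unfolding jordan_automorphism_def by simp
  qed
  have two: "sc 2 v = v + v" for v
    using V.scale_left_distrib[of 1 1 v] by (simp add: one_add_one)
  have Dmul: "\<Delta> (m x y) = m (\<Delta> x) (\<Delta> y)" for x y
  proof -
    have "\<Delta> (m (x + y) (x + y)) = m (\<Delta> (x + y)) (\<Delta> (x + y))" by (rule Dsq)
    then have "\<Delta> (m x x) + (\<Delta> (m x y) + \<Delta> (m x y)) + \<Delta> (m y y)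
        = m (\<Delta> x) (\<Delta> x) + (m (\<Delta> x) (\<Delta> y) + m (\<Delta> x) (\<Delta> y)) + m (\<Delta> y) (\<Delta> y)"
      by (simp add: Dadd madd1 madd2 mcomm[of y x] mcomm[of "\<Delta> y" "\<Delta> x"] add_ac)
    then have "\<Delta> (m x y) + \<Delta> (m x y) = m (\<Delta> x) (\<Delta> y) + m (\<Delta> x) (\<Delta> y)"
      by (simp add: Dsq)
    then have "sc 2 (\<Delta> (m x y)) = sc 2 (m (\<Delta> x) (\<Delta> y))" by (simp add: two)
    then show ?thesis using char by auto
  qed
  have injD: "inj \<Delta>"
  proof (rule injI)
    fix x y assume eq: "\<Delta> x = \<Delta> y"
    have "\<Delta> (x - y) + \<Delta> y = \<Delta> x" using Dadd[of "x - y" y] by simp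
    then have z: "\<Delta> (x - y) = 0" using eq by simp
    obtain \<Phi> where P: "jordan_automorphism sc m \<Phi>" "\<Delta> (x - y) = \<Phi> (x - y)"
      using local2 by blast
    have linP: "Vector_Spaces.linear sc sc \<Phi>" and bP: "bij \<Phi>"
      using P(1) unfolding jordan_automorphism_def by blast+
    interpret L: Vector_Spaces.linear sc sc \<Phi> by (rule linP)
    have "\<Phi> (x - y) = \<Phi> 0" using z P(2) L.zero by simp
    then have "x - y = 0" using bP unfolding bij_def inj_def by blast
    then show "x = y" by simp
  qed
  interpret FV: finite_dimensional_vector_space sc B
    by unfold_locales (use finB indep spanB in auto)
  have "surj \<Delta>" by (rule FV.linear_inj_imp_surj[OF linD injD])
  then show ?thesis unfolding jordan_automorphism_def using linD injD Dmul bij_def by blast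
qed
end
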